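(* Let $0<\beta<2$, $d\in\mathbb{N}$, $\kappa\in\mathbb{R}$ and $N\in(0,\infty)$. Suppose that \[\frac1N(\mathcal{L}u(x))^2\le \Gamma_2(u)(x)+\kappa\,\Gamma(u)(x)\] holds for all $u\in C_c^\infty(\mathbb{R}^d)$ and all $x\in\mathbb{R}^d$ (i.e. $\mathcal{L}$ satisfies $CD(\kappa,N)$). Then \[\frac1N(\mathcal{L}u(x))^2\le \Gamma_2(u)(x)\] for all $u\in C_c^\infty(\mathbb{R}^d)$ and all $x\in\mathbb{R}^d$, i.e. $\mathcal{L}$ satisfies $CD(0,N)$.
   Context: $c_{\beta,d}=\frac{2^\beta\Gamma(\frac{d+\beta}{2})}{\pi^{d/2}|\Gamma(-\frac{\beta}{2})|}$; $\mathcal{L}u(x)=c_{\beta,d}\int_{\mathbb{R}^d}\frac{u(x+h)-2u(x)+u(x-h)}{|h|^{d+\beta}}dh$; $\Gamma(u)(x)=c_{\beta,d}\int_{\mathbb{R}^d}\frac{(u(x+h)-u(x))^2}{|h|^{d+\beta}}dh$; $\Gamma_2(u)(x)=c_{\beta,d}^2\int_{\mathbb{R}^d}\int_{\mathbb{R}^d}\frac{[u(x+h+\sigma)-u(x+h)-u(x+\sigma)+u(x)]^2}{|h|^{d+\beta}|\sigma|^{d+\beta}}dh\,d\sigma$. *)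

theory Defs
  imports "HOL-Analysis.Analysis"
begin

fun Ck :: "nat \<Rightarrow> ('a::euclidean_space \<Rightarrow> real) \<Rightarrow> bool" where
  "Ck 0 f = continuous_on UNIV f"
| "Ck (Suc k) f = (continuous_on UNIV f \<and> (\<forall>x. f differentiable (at x)) \<and>
      (\<forall>v. Ck k (\<lambda>x. frechet_derivative f (at x) v)))"

definition smooth_compact :: "('a::euclidean_space \<Rightarrow> real) \<Rightarrow> bool" where
  "smooth_compact u \<longleftrightarrow> (\<forall>k. Ck k u) \<and> compact (closure {x. u x \<noteq> 0})"

definition c_const :: "real \<Rightarrow> nat \<Rightarrow> real" where
  "c_const \<beta> d = 2 powr \<beta> * Gamma ((real d + \<beta>) / 2)
      / (pi powr (real d / 2) * \<bar>Gamma (- \<beta> / 2)\<bar>)"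

definition fracL :: "real \<Rightarrow> ('a::euclidean_space \<Rightarrow> real) \<Rightarrow> 'a \<Rightarrow> real" where
  "fracL \<beta> u x = c_const \<beta> DIM('a) *
     (LINT h|lborel. (u (x + h) - 2 * u x + u (x - h)) / norm h powr (real DIM('a) + \<beta>))"

definition Gam :: "real \<Rightarrow> ('a::euclidean_space \<Rightarrow> real) \<Rightarrow> 'a \<Rightarrow> real" where
  "Gam \<beta> u x = c_const \<beta> DIM('a) *
     (LINT h|lborel. (u (x + h) - u x)\<^sup>2 / norm h powr (real DIM('a) + \<beta>))"

definition Gam2 :: "real \<Rightarrow> ('a::euclidean_space \<Rightarrow> real) \<Rightarrow> 'a \<Rightarrow> real" where
  "Gam2 \<beta> u x = (c_const \<beta> DIM('a))\<^sup>2 *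
     (LINT \<sigma>|lborel. LINT h|lborel.
        (u (x + h + \<sigma>) - u (x + h) - u (x + \<sigma>) + u x)\<^sup>2
        / (norm h powr (real DIM('a) + \<beta>) * norm \<sigma> powr (real DIM('a) + \<beta>)))"

end

theory Submission
  imports Defs
begin

lemma nn_integral_scale:
  fixes f :: "'a::euclidean_space \<Rightarrow> ennreal" and c :: real
  assumes [measurable]: "f \<in> borel_measurable borel" and c: "c \<noteq> 0"
  shows "(\<integral>\<^sup>+x. f x \<partial>lborel) = ennreal (\<bar>c\<bar>^DIM('a)) * (\<integral>\<^sup>+x. f (c *\<^sub>R x) \<partial>lborel)"
  by (subst lborel_affine[OF c, of 0])
     (simp add: nn_integral_density nn_integral_distr nn_integral_cmult)

lemma integrable_scale:
  fixes f :: "'a::euclidean_space \<Rightarrow> real"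
  assumes f: "integrable lborel f" and c: "c \<noteq> 0"
  shows "integrable lborel (\<lambda>x. f (c *\<^sub>R x))"
proof -
  have m[measurable]: "f \<in> borel_measurable borel" using f by (simp add: borel_measurable_integrable)
  have "(\<integral>\<^sup>+x. ennreal (norm (f x)) \<partial>lborel) < \<infinity>" using f by (simp add: integrable_iff_bounded)
  then have "ennreal (\<bar>c\<bar>^DIM('a)) * (\<integral>\<^sup>+x. ennreal (norm (f (c *\<^sub>R x))) \<partial>lborel) < \<infinity>"
    by (subst (asm) nn_integral_scale[OF _ c]) auto
  moreover have "ennreal (\<bar>c\<bar>^DIM('a)) \<noteq> 0" using c by simp
  ultimately have "(\<integral>\<^sup>+x. ennreal (norm (f (c *\<^sub>R x))) \<partial>lborel) < \<infinity>"
    by (metis ennreal_mult_less_top infinity_ennreal_def mult_eq_0_iff top.not_eq_extremum)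
  then show ?thesis by (simp add: integrable_iff_bounded)
qed

lemma integrable_scale_iff:
  fixes f :: "'a::euclidean_space \<Rightarrow> real"
  assumes c: "c \<noteq> 0"
  shows "integrable lborel (\<lambda>x. f (c *\<^sub>R x)) \<longleftrightarrow> integrable lborel f"
  using integrable_scale[of f c] integrable_scale[of "\<lambda>x. f (c *\<^sub>R x)" "1/c"] c
  by auto

lemma integral_scale:
  fixes f :: "'a::euclidean_space \<Rightarrow> real"
  assumes c: "c \<noteq> 0"
  shows "(\<integral>x. f x \<partial>lborel) = \<bar>c\<bar>^DIM('a) * (\<integral>x. f (c *\<^sub>R x) \<partial>lborel)"
proof cases
  assume f[measurable]: "integrable lborel f" then show ?thesis
    using c f f[THEN borel_measurable_integrable] integrable_scale[OF f c]
    by (subst lborel_affine[OF c, of 0])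
       (simp add: integral_density integral_distr)
next
  assume "\<not> integrable lborel f" with c show ?thesis
    by (simp add: integrable_scale_iff not_integrable_integral_eq)
qed

lemma Ck_scale:
  "Ck k (f::'a::euclidean_space \<Rightarrow> real) \<Longrightarrow> Ck k (\<lambda>x. a * f (c *\<^sub>R x))"
proof (induction k arbitrary: f a)
  case 0
  then show ?case by (auto intro!: continuous_intros continuous_on_compose2[of UNIV f] )
next
  case (Suc k)
  then have cf: "continuous_on UNIV f" and df: "\<And>x. f differentiable (at x)"
    and ck: "\<And>v. Ck k (\<lambda>x. frechet_derivative f (at x) v)" by auto
  have hd: "((\<lambda>x. a * f (c *\<^sub>R x)) has_derivative
      (\<lambda>v. a * frechet_derivative f (at (c *\<^sub>R x)) (c *\<^sub>R v))) (at x)" for x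
  proof -
    have "(f has_derivative frechet_derivative f (at (c *\<^sub>R x))) (at (c *\<^sub>R x))"
      using df frechet_derivative_works by blast
    then have "((\<lambda>x. f (c *\<^sub>R x)) has_derivative
      (\<lambda>v. frechet_derivative f (at (c *\<^sub>R x)) (c *\<^sub>R v))) (at x)"
      using has_derivative_compose[of "\<lambda>x. c *\<^sub>R x" "\<lambda>v. c *\<^sub>R v" x UNIV f]
        bounded_linear_imp_has_derivative[OF bounded_linear_scaleR_right[of c]]
      by blast
    then show ?thesis by (auto intro!: derivative_eq_intros)
  qed
  have fd: "frechet_derivative (\<lambda>x. a * f (c *\<^sub>R x)) (at x) v =
      (a * c) * frechet_derivative f (at (c *\<^sub>R x)) v" for x v
  proof -
    have lin: "linear (frechet_derivative f (at (c *\<^sub>R x)))"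
      using df frechet_derivative_works has_derivative_linear by blast
    show ?thesis using frechet_derivative_at[OF hd[of x]] linear_cmul[OF lin]
      by (metis mult.assoc real_scaleR_def)
  qed
  show ?case
    using cf hd ck Suc.IH
    by (auto simp: fd differentiable_def intro!: continuous_intros continuous_on_compose2[of UNIV f])
qed

lemma scale_int:
  fixes g :: "'a::euclidean_space \<Rightarrow> real" and c \<beta> :: real
  assumes c: "c > 0"
  shows "(LINT h|lborel. c powr (real DIM('a) + \<beta>) * g (c *\<^sub>R h)) = c powr \<beta> * (LINT k|lborel. g k)"
proof -
  have "(LINT h|lborel. c powr (real DIM('a) + \<beta>) * g (c *\<^sub>R h))
      = c powr (real DIM('a) + \<beta>) * (LINT h|lborel. g (c *\<^sub>R h))" by simp
  also have "(LINT k|lborel. g k) = c^DIM('a) * (LINT h|lborel. g (c *\<^sub>R h))"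
    using integral_scale[of c g] c by simp
  moreover have "c powr (real DIM('a) + \<beta>) = c^DIM('a) * c powr \<beta>"
    using c by (simp add: powr_add powr_realpow)
  ultimately show ?thesis by simp
qed

lemma fracL_scale:
  fixes u :: "'a::euclidean_space \<Rightarrow> real"
  assumes c: "c > 0"
  shows "fracL \<beta> (\<lambda>y. u (c *\<^sub>R y)) ((1/c) *\<^sub>R x) = c powr \<beta> * fracL \<beta> u x"
proof -
  define P where "P = real DIM('a) + \<beta>"
  define g where "g k = (u (x + k) - 2 * u x + u (x - k)) / norm k powr P" for k
  have pw: "(u (c *\<^sub>R ((1/c) *\<^sub>R x + h)) - 2 * u (c *\<^sub>R ((1/c) *\<^sub>R x)) + u (c *\<^sub>R ((1/c) *\<^sub>R x - h)))
        / norm h powr P = c powr P * g (c *\<^sub>R h)" for h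
    using c by (simp add: g_def scaleR_add_right scaleR_diff_right powr_mult)
  show ?thesis
    unfolding fracL_def P_def[symmetric]
    unfolding pw scale_int[OF c, where g=g and \<beta>=\<beta>, unfolded P_def[symmetric]]
    by (simp add: g_def[abs_def])
qed

lemma Gam_scale:
  fixes u :: "'a::euclidean_space \<Rightarrow> real"
  assumes c: "c > 0"
  shows "Gam \<beta> (\<lambda>y. u (c *\<^sub>R y)) ((1/c) *\<^sub>R x) = c powr \<beta> * Gam \<beta> u x"
proof -
  define P where "P = real DIM('a) + \<beta>"
  define g where "g k = (u (x + k) - u x)\<^sup>2 / norm k powr P" for k
  have pw: "(u (c *\<^sub>R ((1/c) *\<^sub>R x + h)) - u (c *\<^sub>R ((1/c) *\<^sub>R x)))\<^sup>2
        / norm h powr P = c powr P * g (c *\<^sub>R h)" for h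
    using c by (simp add: g_def scaleR_add_right scaleR_diff_right powr_mult)
  show ?thesis
    unfolding Gam_def P_def[symmetric]
    unfolding pw scale_int[OF c, where g=g and \<beta>=\<beta>, unfolded P_def[symmetric]]
    by (simp add: g_def[abs_def])
qed

lemma Gam2_scale:
  fixes u :: "'a::euclidean_space \<Rightarrow> real"
  assumes c: "c > 0"
  shows "Gam2 \<beta> (\<lambda>y. u (c *\<^sub>R y)) ((1/c) *\<^sub>R x) = (c powr \<beta>)\<^sup>2 * Gam2 \<beta> u x"
proof -
  define P where "P = real DIM('a) + \<beta>"
  define g where "g k s = (u (x + k + s) - u (x + k) - u (x + s) + u x)\<^sup>2
        / (norm k powr P * norm s powr P)" for k s
  define H where "H s = (LINT k|lborel. g k s)" for s
  have pw: "(u (c *\<^sub>R ((1/c) *\<^sub>R x + h + \<sigma>)) - u (c *\<^sub>R ((1/c) *\<^sub>R x + h))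
         - u (c *\<^sub>R ((1/c) *\<^sub>R x + \<sigma>)) + u (c *\<^sub>R ((1/c) *\<^sub>R x)))\<^sup>2
        / (norm h powr P * norm \<sigma> powr P) = c powr P * (c powr P * g (c *\<^sub>R h) (c *\<^sub>R \<sigma>))" for h \<sigma>
    using c by (simp add: g_def scaleR_add_right scaleR_diff_right powr_mult)
  have inner: "(LINT h|lborel. c powr P * (c powr P * g (c *\<^sub>R h) (c *\<^sub>R \<sigma>)))
       = c powr \<beta> * (c powr P * H (c *\<^sub>R \<sigma>))" for \<sigma>
  proof -
    have "(LINT h|lborel. c powr P * (c powr P * g (c *\<^sub>R h) (c *\<^sub>R \<sigma>)))
       = c powr P * (LINT h|lborel. c powr P * g (c *\<^sub>R h) (c *\<^sub>R \<sigma>))" by simp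
    also have "\<dots> = c powr P * (c powr \<beta> * H (c *\<^sub>R \<sigma>))"
      using scale_int[OF c, where g="\<lambda>k. g k (c *\<^sub>R \<sigma>)" and \<beta>=\<beta>] by (simp add: P_def H_def)
    finally show ?thesis by simp
  qed
  have outer: "(LINT \<sigma>|lborel. c powr \<beta> * (c powr P * H (c *\<^sub>R \<sigma>)))
       = c powr \<beta> * (c powr \<beta> * (LINT s|lborel. H s))"
    using scale_int[OF c, where g=H and \<beta>=\<beta>] by (simp add: P_def)
  show ?thesis
    unfolding Gam2_def P_def[symmetric]
    by (simp only: pw inner outer) (simp add: H_def g_def power2_eq_square)
qed

lemma smooth_compact_scale:
  fixes u :: "'a::euclidean_space \<Rightarrow> real"
  assumes su: "smooth_compact u" and c: "c > 0"
  shows "smooth_compact (\<lambda>y. u (c *\<^sub>R y))"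
proof -
  have "Ck k (\<lambda>y. u (c *\<^sub>R y))" for k
    using Ck_scale[of k u 1 c] su by (simp add: smooth_compact_def)
  moreover have "{y. u (c *\<^sub>R y) \<noteq> 0} = (*\<^sub>R) (1/c) ` {x. u x \<noteq> 0}"
  proof (rule set_eqI, rule iffI)
    fix y assume "y \<in> {y. u (c *\<^sub>R y) \<noteq> 0}"
    then show "y \<in> (*\<^sub>R) (1/c) ` {x. u x \<noteq> 0}"
      using c by (auto intro!: image_eqI[where x="c *\<^sub>R y"])
  next
    fix y assume "y \<in> (*\<^sub>R) (1/c) ` {x. u x \<noteq> 0}"
    then show "y \<in> {y. u (c *\<^sub>R y) \<noteq> 0}" using c by auto
  qed
  moreover have "compact (closure {x. u x \<noteq> 0})" using su by (simp add: smooth_compact_def)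
  ultimately show ?thesis
    unfolding smooth_compact_def by (metis closure_scaleR compact_scaling)
qed

lemma real_limit_arg:
  fixes A B K :: real
  assumes "\<And>s. s > 0 \<Longrightarrow> A \<le> B + K / s"
  shows "A \<le> B"
proof (rule ccontr)
  assume "\<not> A \<le> B"
  then have d: "A - B > 0" by simp
  define s where "s = 2 * (\<bar>K\<bar> + 1) / (A - B)"
  have sp: "s > 0" using d by (simp add: s_def)
  have "K / s \<le> \<bar>K\<bar> / s" using sp by (simp add: divide_right_mono)
  also have "\<dots> = (A - B) * (\<bar>K\<bar> / (2 * (\<bar>K\<bar> + 1)))"
    using d unfolding s_def by (simp add: field_simps)
  also have "\<dots> < (A - B) * 1"
    by (rule mult_strict_left_mono[OF _ d]) simp
  also have "\<dots> = A - B" by simp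
  finally show False using assms[OF sp] by simp
qed

theorem proposition2p3:
  fixes \<beta> \<kappa> N :: real
  assumes "0 < \<beta>" and "\<beta> < 2" and "0 < N"
    and CD: "\<And>(u :: 'a::euclidean_space \<Rightarrow> real) x. smooth_compact u \<Longrightarrow>
       (fracL \<beta> u x)\<^sup>2 / N \<le> Gam2 \<beta> u x + \<kappa> * Gam \<beta> u x"
  shows "\<And>(u :: 'a \<Rightarrow> real) x. smooth_compact u \<Longrightarrow>
       (fracL \<beta> u x)\<^sup>2 / N \<le> Gam2 \<beta> u x"
proof -
  fix u :: "'a \<Rightarrow> real" and x assume su: "smooth_compact u"
  show "(fracL \<beta> u x)\<^sup>2 / N \<le> Gam2 \<beta> u x"
  proof (rule real_limit_arg[where K="\<kappa> * Gam \<beta> u x"])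
    fix s :: real assume s: "s > 0"
    define c where "c = s powr (1/\<beta>)"
    have c: "c > 0" using s by (simp add: c_def)
    have cs: "c powr \<beta> = s" using s \<open>0 < \<beta>\<close> by (simp add: c_def powr_powr)
    have "(fracL \<beta> (\<lambda>y. u (c *\<^sub>R y)) ((1/c) *\<^sub>R x))\<^sup>2 / N
       \<le> Gam2 \<beta> (\<lambda>y. u (c *\<^sub>R y)) ((1/c) *\<^sub>R x) + \<kappa> * Gam \<beta> (\<lambda>y. u (c *\<^sub>R y)) ((1/c) *\<^sub>R x)"
      by (rule CD[OF smooth_compact_scale[OF su c]])
    then have "(s * fracL \<beta> u x)\<^sup>2 / N \<le> s\<^sup>2 * Gam2 \<beta> u x + \<kappa> * (s * Gam \<beta> u x)"
      by (simp only: fracL_scale[OF c] Gam_scale[OF c] Gam2_scale[OF c] cs)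
    moreover have "(s * fracL \<beta> u x)\<^sup>2 / N = s\<^sup>2 * ((fracL \<beta> u x)\<^sup>2 / N)"
      by (simp add: power_mult_distrib)
    moreover have "s\<^sup>2 * (Gam2 \<beta> u x + \<kappa> * Gam \<beta> u x / s) = s\<^sup>2 * Gam2 \<beta> u x + \<kappa> * (s * Gam \<beta> u x)"
      using s by (simp add: field_simps power2_eq_square)
    ultimately have "s\<^sup>2 * ((fracL \<beta> u x)\<^sup>2 / N) \<le> s\<^sup>2 * (Gam2 \<beta> u x + \<kappa> * Gam \<beta> u x / s)"
      by simp
    moreover have "0 < s\<^sup>2" using s by simp
    ultimately show "(fracL \<beta> u x)\<^sup>2 / N \<le> Gam2 \<beta> u x + \<kappa> * Gam \<beta> u x / s"
      using mult_le_cancel_left_pos by blast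
  qed
qed

end
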